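(* Let $\mathcal S$ be a complete separable metric space, $\mu$ a boundedly finite Borel measure on $\mathcal S$ and $a,\rho,k>0$. For a finite family of pairwise disjoint bounded Borel sets $A_1,\dots,A_l$ and nonnegative integers $n_1,\dots,n_l$ define $$P_l(A_1,\dots,A_l;n_1,\dots,n_l)=\frac{\rho_{(k\sum_{i=1}^l\mu(A_i))}\,a_{(\sum_{i=1}^l n_i)}}{(\rho+a)_{(k\sum_{i=1}^l\mu(A_i)+\sum_{i=1}^l n_i)}}\prod_{i=1}^l\frac{[k\mu(A_i)]_{(n_i)}}{n_i!}.$$ Then (I) for every permutation $i_1,\dots,i_l$ of $1,\dots,l$, $P_l(A_{i_1},\dots,A_{i_l};n_{i_1},\dots,n_{i_l})=P_l(A_1,\dots,A_l;n_1,\dots,n_l)$; and (II) for $l\ge2$, $\sum_{r=0}^\infty P_l(A_1,\dots,A_l;n_1,\dots,n_{l-1},r)=P_{l-1}(A_1,\dots,A_{l-1};n_1,\dots,n_{l-1})$.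
   Context: For $x>0$, $\beta\ge0$, $x_{(\beta)}=\Gamma(x+\beta)/\Gamma(x)$, with the convention $0_{(0)}=1$ and $0_{(n)}=0$ for integers $n\ge1$. *)

theory Defs
  imports "HOL-Analysis.Analysis"
begin

text \<open>Rising factorial x_(beta) = Gamma(x+beta)/Gamma(x) for x > 0, with the
  convention 0_(0) = 1 and 0_(beta) = 0 for beta > 0 (only integer beta occur with x = 0).\<close>
definition rising :: "real \<Rightarrow> real \<Rightarrow> real" where
  "rising x b = (if x > 0 then Gamma (x + b) / Gamma x else if b = 0 then 1 else 0)"

definition Pl :: "real \<Rightarrow> real \<Rightarrow> real \<Rightarrow> 'a measure \<Rightarrow> nat \<Rightarrow> (nat \<Rightarrow> 'a set) \<Rightarrow> (nat \<Rightarrow> nat) \<Rightarrow> real" where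
  "Pl a \<rho> k M l A n =
     (let S = (\<Sum>i=1..l. measure M (A i)); N = real (\<Sum>i=1..l. n i) in
      rising \<rho> (k * S) * rising a N / rising (\<rho> + a) (k * S + N)
      * (\<Prod>i=1..l. rising (k * measure M (A i)) (real (n i)) / fact (n i)))"

end

theory Submission imports Defs "HOL-Analysis.Analysis" begin
lemma gamma_poch: "(x::real) > 0 \<Longrightarrow> Gamma (x + real r) = pochhammer x r * Gamma x"
  using pochhammer_Gamma[of x r] Gamma_real_pos[of x]
  by (simp add: nonpos_Ints_def) (smt (verit) Gamma_real_pos nonzero_mult_div_cancel_right times_divide_eq_right)

lemma binser:
  fixes b t :: real assumes b: "b > 0" and t: "0 < t" "t < 1"
  shows "(\<lambda>r. Gamma (b + real r) / fact r * t ^ r) sums (Gamma b * (1 - t) powr (- b))"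
proof -
  have "\<bar>-t\<bar> < 1" using t by simp
  from gen_binomial_real[OF this, of "-b"]
  have "(\<lambda>r. ((-b) gchoose r) * (-t)^r) sums (1 - t) powr (-b)" by simp
  also have "(\<lambda>r. ((-b) gchoose r) * (-t)^r) = (\<lambda>r. pochhammer b r / fact r * t ^ r)"
    by (rule ext) (simp add: gbinomial_pochhammer power_mult_distrib[symmetric] flip: power_mult_distrib)
  finally have "(\<lambda>r. Gamma b * (pochhammer b r / fact r * t ^ r)) sums (Gamma b * (1 - t) powr (- b))"
    by (rule sums_mult)
  thus ?thesis using gamma_poch[OF b] by (simp add: mult_ac)
qed

lemma beta_ioo:
  fixes p q :: real assumes "p > 0" "q > 0"
  shows "((\<lambda>t. t powr (p - 1) * (1 - t) powr (q - 1)) has_integral Beta p q) {0<..<1}"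
  using has_integral_Beta_real[OF assms] by (simp add: has_integral_Icc_iff_Ioo)

lemma gauss:
  fixes \<alpha> \<beta> c :: real assumes \<alpha>: "\<alpha> > 0" and \<beta>: "\<beta> > 0" and c: "c > 0"
  shows "(\<lambda>r. Gamma (\<alpha> + real r) * Gamma (\<beta> + real r) / (Gamma (\<alpha> + \<beta> + c + real r) * fact r))
     sums (Gamma \<alpha> * Gamma \<beta> * Gamma c / (Gamma (\<beta> + c) * Gamma (\<alpha> + c)))"
proof -
  define u where "u r t = Gamma (\<beta> + real r) / fact r * (t powr (\<alpha> + real r - 1) * (1 - t) powr (\<beta> + c - 1))" for r t
  define f where "f n t = (\<Sum>r<n. u r t)" for n t
  define g where "g t = Gamma \<beta> * (t powr (\<alpha> - 1) * (1 - t) powr (c - 1))" for t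
  define S where "S = {0<..<(1::real)}"
  have ui: "(u r has_integral (Gamma (\<beta> + real r) / fact r * Beta (\<alpha> + real r) (\<beta> + c))) S" for r
    unfolding u_def S_def
    by (intro has_integral_mult_right beta_ioo) (use \<alpha> \<beta> c in auto)
  have fi: "(f n has_integral (\<Sum>r<n. Gamma (\<beta> + real r) / fact r * Beta (\<alpha> + real r) (\<beta> + c))) S" for n
    unfolding f_def by (rule has_integral_sum) (use ui in auto)
  have gi: "(g has_integral (Gamma \<beta> * Beta \<alpha> c)) S"
    unfolding g_def S_def by (intro has_integral_mult_right beta_ioo) (use \<alpha> c in auto)
  have usum: "(\<lambda>r. u r t) sums g t" if "t \<in> S" for t
  proof -
    from that have t: "0 < t" "t < 1" by (auto simp: S_def)
    have *: "\<alpha> + real r - 1 = real r + (\<alpha> - 1)" for r by simp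
    have "(\<lambda>r. (Gamma (\<beta> + real r) / fact r * t ^ r) * (t powr (\<alpha> - 1) * (1 - t) powr (\<beta> + c - 1)))
       sums (Gamma \<beta> * (1 - t) powr (- \<beta>) * (t powr (\<alpha> - 1) * (1 - t) powr (\<beta> + c - 1)))"
      by (rule sums_mult2[OF binser[OF \<beta> t]])
    moreover have "Gamma \<beta> * (1 - t) powr (- \<beta>) * (t powr (\<alpha> - 1) * (1 - t) powr (\<beta> + c - 1)) = g t"
      using t by (simp add: g_def powr_add[symmetric] mult_ac)
    moreover have "(Gamma (\<beta> + real r) / fact r * t ^ r) * (t powr (\<alpha> - 1) * (1 - t) powr (\<beta> + c - 1)) = u r t" for r
      using t by (simp add: u_def powr_add[symmetric] powr_realpow[symmetric] mult_ac "*")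
    ultimately show ?thesis by simp
  qed
  have unn: "u r t \<ge> 0" for r t
    unfolding u_def using \<beta> by (intro mult_nonneg_nonneg divide_nonneg_nonneg) (auto intro: less_imp_le Gamma_real_pos)
  have lim: "(\<lambda>n. integral S (f n)) \<longlonglongrightarrow> integral S g"
  proof (rule dominated_convergence(2))
    show "f n integrable_on S" for n using fi by blast
    show "g integrable_on S" using gi by blast
    show "norm (f n t) \<le> g t" if "t \<in> S" for n t
    proof -
      have "norm (f n t) = f n t" unfolding f_def using unn by (simp add: sum_nonneg)
      also have "\<dots> \<le> g t" unfolding f_def
        using sum_le_suminf[OF sums_summable[OF usum[OF that]], of "{..<n}"] unn sums_unique[OF usum[OF that]]
        by simp
      finally show ?thesis .
    qed
    show "(\<lambda>n. f n t) \<longlonglongrightarrow> g t" if "t \<in> S" for t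
      using usum[OF that] unfolding sums_def f_def .
  qed
  hence "(\<lambda>r. Gamma (\<beta> + real r) / fact r * Beta (\<alpha> + real r) (\<beta> + c)) sums (Gamma \<beta> * Beta \<alpha> c)"
  proof -
    have "integral S (f n) = (\<Sum>r<n. Gamma (\<beta> + real r) / fact r * Beta (\<alpha> + real r) (\<beta> + c))" for n
      using fi by (rule integral_unique)
    moreover have "integral S g = Gamma \<beta> * Beta \<alpha> c" using gi by (rule integral_unique)
    ultimately show ?thesis using lim unfolding sums_def by simp
  qed
  hence "(\<lambda>r. (Gamma (\<beta> + real r) / fact r * Beta (\<alpha> + real r) (\<beta> + c)) / Gamma (\<beta> + c))
      sums (Gamma \<beta> * Beta \<alpha> c / Gamma (\<beta> + c))"
    by (rule sums_divide)
  moreover have "(Gamma (\<beta> + real r) / fact r * Beta (\<alpha> + real r) (\<beta> + c)) / Gamma (\<beta> + c) =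
     Gamma (\<alpha> + real r) * Gamma (\<beta> + real r) / (Gamma (\<alpha> + \<beta> + c + real r) * fact r)" for r
  proof -
    have "Gamma (\<beta> + c) > 0" using \<beta> c by (intro Gamma_real_pos) auto
    thus ?thesis by (simp add: Beta_def field_simps add_ac)
  qed
  moreover have "Gamma \<beta> * Beta \<alpha> c / Gamma (\<beta> + c) = Gamma \<alpha> * Gamma \<beta> * Gamma c / (Gamma (\<beta> + c) * Gamma (\<alpha> + c))"
    by (simp add: Beta_def mult_ac)
  ultimately show ?thesis by simp
qed


lemma rising_pos: "y > 0 \<Longrightarrow> rising y b = Gamma (y + b) / Gamma y"
  by (simp add: rising_def)

lemma rising_zero: "rising 0 (real r) = (if r = 0 then 1 else 0)"
  by (simp add: rising_def)

lemma Pl_Suc: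
  "Pl a \<rho> k M (Suc L) A n' =
    rising \<rho> (k * (\<Sum>i=1..L. measure M (A i)) + k * measure M (A (Suc L)))
    * rising a (real (\<Sum>i=1..L. n' i) + real (n' (Suc L)))
    / rising (\<rho> + a) (k * (\<Sum>i=1..L. measure M (A i)) + k * measure M (A (Suc L)) + (real (\<Sum>i=1..L. n' i) + real (n' (Suc L))))
    * ((\<Prod>i=1..L. rising (k * measure M (A i)) (real (n' i)) / fact (n' i))
       * (rising (k * measure M (A (Suc L))) (real (n' (Suc L))) / fact (n' (Suc L))))"
  by (simp add: Pl_def Let_def distrib_left)


theorem theorem4:
  fixes M :: "'a::polish_space measure"
    and a \<rho> k :: real and l :: nat
    and A :: "nat \<Rightarrow> 'a set" and n :: "nat \<Rightarrow> nat"
  assumes "sets M = sets borel"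
    and "\<And>B. B \<in> sets borel \<Longrightarrow> bounded B \<Longrightarrow> emeasure M B < \<infinity>"
    and "a > 0" "\<rho> > 0" "k > 0"
    and "\<And>i. i \<in> {1..l} \<Longrightarrow> A i \<in> sets borel"
    and "\<And>i. i \<in> {1..l} \<Longrightarrow> bounded (A i)"
    and "disjoint_family_on A {1..l}"
  shows "(\<forall>\<pi>. \<pi> permutes {1..l} \<longrightarrow> Pl a \<rho> k M l (A \<circ> \<pi>) (n \<circ> \<pi>) = Pl a \<rho> k M l A n)
       \<and> (l \<ge> 2 \<longrightarrow> (\<lambda>r. Pl a \<rho> k M l A (n(l := r))) sums Pl a \<rho> k M (l - 1) A n)"
proof (intro conjI allI impI)
  fix \<pi> assume p: "\<pi> permutes {1..l}"
  show "Pl a \<rho> k M l (A \<circ> \<pi>) (n \<circ> \<pi>) = Pl a \<rho> k M l A n"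
    using sum.permute[OF p, of "\<lambda>i. measure M (A i)"] sum.permute[OF p, of n]
      prod.permute[OF p, of "\<lambda>i. rising (k * measure M (A i)) (real (n i)) / fact (n i)"]
    by (simp add: Pl_def Let_def o_def)
next
  assume "l \<ge> 2"
  then obtain L where l: "l = Suc L" and L: "L \<ge> 1" by (cases l) auto
  define s where "s = k * (\<Sum>i=1..L. measure M (A i))"
  define x where "x = k * measure M (A (Suc L))"
  define N where "N = (\<Sum>i=1..L. n i)"
  define C where "C = (\<Prod>i=1..L. rising (k * measure M (A i)) (real (n i)) / fact (n i))"
  have s0: "s \<ge> 0" unfolding s_def using \<open>k > 0\<close> by (intro mult_nonneg_nonneg sum_nonneg) auto
  have x0: "x \<ge> 0" unfolding x_def using \<open>k > 0\<close> by simp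
  have T: "Pl a \<rho> k M l A (n(l := r)) =
     rising \<rho> (s + x) * rising a (real N + real r) / rising (\<rho> + a) (s + x + (real N + real r))
      * (C * (rising x (real r) / fact r))" for r
  proof -
    have "(\<Sum>i=1..L. (n(Suc L := r)) i) = N" unfolding N_def by (intro sum.cong) auto
    moreover have "(\<Prod>i=1..L. rising (k * measure M (A i)) (real ((n(Suc L := r)) i)) / fact ((n(Suc L := r)) i)) = C"
      unfolding C_def by (intro prod.cong) auto
    ultimately show ?thesis unfolding l Pl_Suc by (simp add: s_def x_def)
  qed
  have P: "Pl a \<rho> k M (l - 1) A n = rising \<rho> s * rising a (real N) / rising (\<rho> + a) (s + real N) * C"
    by (simp add: l Pl_def Let_def s_def N_def C_def)
  have ra: "\<rho> + a > 0" using \<open>a > 0\<close> \<open>\<rho> > 0\<close> by simp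
  show "(\<lambda>r. Pl a \<rho> k M l A (n(l := r))) sums Pl a \<rho> k M (l - 1) A n"
  proof (cases "x = 0")
    case True
    have "(\<lambda>r. Pl a \<rho> k M l A (n(l := r))) = (\<lambda>r. if r = 0 then Pl a \<rho> k M (l - 1) A n else 0)"
      using P by (intro ext) (simp add: T True rising_zero)
    then show ?thesis using sums_single[of 0 "\<lambda>_. Pl a \<rho> k M (l - 1) A n"] by simp
  next
    case False
    with x0 have xp: "x > 0" by simp
    define \<alpha> where "\<alpha> = a + real N"
    define c where "c = \<rho> + s"
    have \<alpha>p: "\<alpha> > 0" unfolding \<alpha>_def using \<open>a > 0\<close> by simp
    have cp: "c > 0" unfolding c_def using \<open>\<rho> > 0\<close> s0 by simp
    define K where "K = Gamma (\<rho> + s + x) / Gamma \<rho> / Gamma a * Gamma (\<rho> + a) * C / Gamma x"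
    have G: "(\<lambda>r. K * (Gamma (\<alpha> + real r) * Gamma (x + real r) / (Gamma (\<alpha> + x + c + real r) * fact r)))
       sums (K * (Gamma \<alpha> * Gamma x * Gamma c / (Gamma (x + c) * Gamma (\<alpha> + c))))"
      by (rule sums_mult[OF gauss[OF \<alpha>p xp cp]])
    have gp: "Gamma y > 0" if "y > 0" for y :: real using that by (rule Gamma_real_pos)
    have e1: "Pl a \<rho> k M l A (n(l := r)) = K * (Gamma (\<alpha> + real r) * Gamma (x + real r) / (Gamma (\<alpha> + x + c + real r) * fact r))" for r
    proof -
      have "\<rho> + s + x > 0" "\<rho> + a + s + x + real N + real r > 0" using s0 xp \<open>\<rho> > 0\<close> \<open>a > 0\<close> by auto
      then show ?thesis
        using gp[OF \<open>\<rho> > 0\<close>] gp[OF \<open>a > 0\<close>] gp[OF ra] gp[OF xp]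
        unfolding T K_def \<alpha>_def c_def
        by (simp add: rising_pos \<open>\<rho> > 0\<close> \<open>a > 0\<close> ra xp field_simps add_ac)
    qed
    have e2: "K * (Gamma \<alpha> * Gamma x * Gamma c / (Gamma (x + c) * Gamma (\<alpha> + c))) = Pl a \<rho> k M (l - 1) A n"
    proof -
      have h1: "Gamma (\<rho> + s + x) \<noteq> 0" using s0 xp \<open>\<rho> > 0\<close> by (intro gp[THEN less_imp_neq, symmetric]) auto
      have h2: "Gamma x \<noteq> 0" using gp[OF xp] by simp
      have h3: "Gamma (\<rho> + s) \<noteq> 0" using s0 \<open>\<rho> > 0\<close> by (intro gp[THEN less_imp_neq, symmetric]) auto
      have h4: "Gamma \<rho> \<noteq> 0" "Gamma a \<noteq> 0" "Gamma (\<rho> + a) \<noteq> 0"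
        using gp[OF \<open>\<rho> > 0\<close>] gp[OF \<open>a > 0\<close>] gp[OF ra] by auto
      have h5: "Gamma (\<rho> + a + s + real N) \<noteq> 0" using s0 \<open>a > 0\<close> \<open>\<rho> > 0\<close> by (intro gp[THEN less_imp_neq, symmetric]) auto
      have e: "x + c = \<rho> + s + x" "\<alpha> + c = \<rho> + a + s + real N" "s + real N + (\<rho> + a) = \<rho> + a + s + real N"
        "real N + a = a + real N" "s + \<rho> = \<rho> + s"
        unfolding \<alpha>_def c_def by simp_all
      show ?thesis unfolding P K_def
        by (simp add: rising_pos \<open>\<rho> > 0\<close> \<open>a > 0\<close> ra e h1 h2 h4)
          (simp add: \<alpha>_def c_def field_simps h1 h2 h3 h4 h5)
    qed
    show ?thesis using G unfolding e1[symmetric] e2 .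
  qed
qed

end
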